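(* For $s\in\mu_r$, $v\in\mathcal{A}_1$, $w\in\mathcal{A}_r$: \[ v\diamond_s w=\psi_s\bigl(\varphi(v)\ast\psi_s^{-1}(w)\bigr). \]
   Context: Fix $r\ge1$, $\mu_r$ the $r$th roots of unity, $\mathcal{A}_r=\mathbb{Q}\langle x,y_s\mid s\in\mu_r\rangle$ the free noncommutative polynomial algebra over $\mathbb{Q}$, $\mathcal{A}_1=\mathbb{Q}\langle x,y\rangle$ with $y=y_1$. Write $z=x+y_1$, $z_s=x+y_s$, $\delta(1)=0$, $\delta(s)=1$ ($s\ne1$), $z_s^\delta=x+\delta(s)y_s$, $z_{k,s}=x^{k-1}y_s$. Harmonic product: the $\mathbb{Q}$-bilinear product $\ast$ on $\mathcal{A}_r$ with $1\ast w=w\ast 1=w$, $vy_s\ast wy_t=(v\ast wy_t)y_s+(vy_s\ast w)y_t+(v\ast w)xy_{st}$, and $vx\ast w=v\ast wx=(v\ast w)x$. Let $\varphi$ be the algebra automorphism of $\mathcal{A}_r$ with $\varphi(x)=z$, $\varphi(y_s)=\delta(s)y_s-y_1$. Every word is uniquely $z_{k_1,s_1}\cdots z_{k_l,s_l}x^a$ ($l,a\ge0$); define linear maps $\mathcal{I}(z_{k_1,s_1}\cdots z_{k_l,s_l}x^a)=z_{k_1,s_1}z_{k_2,s_1s_2}\cdots z_{k_l,s_1\cdots s_l}x^a$ and $M_s(z_{k_1,s_1}\cdots z_{k_l,s_l}x^a)=z_{k_1,ss_1}z_{k_2,s_2}\cdots z_{k_l,s_l}x^a$ (with $M_s(x^a)=x^a$),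 and $\psi_s=\varphi\circ\mathcal{I}\circ M_s$ (a linear bijection of $\mathcal{A}_r$). Diamond product: for $s\in\mu_r$, $\diamond_s:\mathcal{A}_1\times\mathcal{A}_r\to\mathcal{A}_r$ is the $\mathbb{Q}$-bilinear map defined recursively on words by $1\diamond_s w=w$, $v\diamond_s1=\psi_s\varphi(v)$, and for $v\in\mathcal{A}_1$, $w\in\mathcal{A}_r$, $1\ne t\in\mu_r$: $vx\diamond_s wx=(v\diamond_s wx)x-(vy\diamond_s w)x$; $vy\diamond_s wx=(v\diamond_s wx)y+(vy\diamond_s w)x$; $vx\diamond_s wy=(v\diamond_s wy)x+(vx\diamond_s w)y$; $vy\diamond_s wy=(v\diamond_s wy)y-(vx\diamond_s w)y$; $vx\diamond_s wy_t=(v\diamond_s wy_t)x+(v\diamond_s wz_t)y_t-(vy\diamond_s w)y_t$; $vy\diamond_s wy_t=(v\diamond_s wy_t)y-(v\diamond_s wz_t)y_t+(vy\diamond_s w)y_t$. *)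

theory Defs
  imports Complex_Main "HOL-Library.Poly_Mapping"
begin

datatype letter = X | Y complex

type_synonym word = "letter list"

type_synonym ncpoly = "word \<Rightarrow>\<^sub>0 rat"

definition mu :: "nat \<Rightarrow> complex set" where
  "mu r = {z. z ^ r = 1}"

definition Alg :: "nat \<Rightarrow> ncpoly set" where
  "Alg r = {p. \<forall>w\<in>Poly_Mapping.keys p. \<forall>t. Y t \<in> set w \<longrightarrow> t \<in> mu r}"

text \<open>A_1 = Q<x,y> with y = y_1.\<close>
definition Alg1 :: "ncpoly set" where
  "Alg1 = {p. \<forall>w\<in>Poly_Mapping.keys p. set w \<subseteq> {X, Y 1}}"

definition W :: "word \<Rightarrow> ncpoly" where
  "W w = Poly_Mapping.single w 1"

definition sc :: "rat \<Rightarrow> ncpoly \<Rightarrow> ncpoly" where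
  "sc c p = Poly_Mapping.map (\<lambda>a. c * a) p"

definition lin :: "(word \<Rightarrow> ncpoly) \<Rightarrow> ncpoly \<Rightarrow> ncpoly" where
  "lin F p = (\<Sum>w\<in>Poly_Mapping.keys p. sc (Poly_Mapping.lookup p w) (F w))"

definition pmul :: "ncpoly \<Rightarrow> ncpoly \<Rightarrow> ncpoly" where
  "pmul p q = lin (\<lambda>u. lin (\<lambda>v. W (u @ v)) q) p"

definition rm :: "ncpoly \<Rightarrow> letter \<Rightarrow> ncpoly" where
  "rm p a = pmul p (W [a])"

definition delta :: "complex \<Rightarrow> rat" where
  "delta s = (if s = 1 then 0 else 1)"

lemma len_pos_aux: "(xs::'a list) \<noteq> [] \<Longrightarrow> length xs - Suc 0 < length xs"
  by (cases xs) auto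

lemma len_pos_aux2: "(xs::'a list) \<noteq> [] \<Longrightarrow> (ys::'b list) \<noteq> [] \<Longrightarrow> length xs - Suc 0 + (length ys - Suc 0) < length xs + length ys"
  by (cases xs; cases ys) auto

function hw :: "word \<Rightarrow> word \<Rightarrow> ncpoly" where
  "hw v w =
    (if v = [] then W w else if w = [] then W v else
     (case last v of
        X \<Rightarrow> rm (hw (butlast v) w) X
      | Y s \<Rightarrow>
          (case last w of
             X \<Rightarrow> rm (hw v (butlast w)) X
           | Y t \<Rightarrow> rm (hw (butlast v) w) (Y s) + rm (hw v (butlast w)) (Y t)
                    + rm (rm (hw (butlast v) (butlast w)) X) (Y (s * t)))))"
  by pat_completeness auto
termination
  by (relation "measure (\<lambda>(v, w). length v + length w)") (auto simp: len_pos_aux len_pos_aux2)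

definition harm :: "ncpoly \<Rightarrow> ncpoly \<Rightarrow> ncpoly" where
  "harm p q = lin (\<lambda>u. lin (\<lambda>v. hw u v) q) p"

fun phi_letter :: "letter \<Rightarrow> ncpoly" where
  "phi_letter X = W [X] + W [Y 1]"
| "phi_letter (Y s) = sc (delta s) (W [Y s]) - W [Y 1]"

fun phi_word :: "word \<Rightarrow> ncpoly" where
  "phi_word [] = W []"
| "phi_word (a # w) = pmul (phi_letter a) (phi_word w)"

definition phi :: "ncpoly \<Rightarrow> ncpoly" where
  "phi = lin phi_word"

text \<open>The map I: z_{k1,s1}...z_{kl,sl} x^a -> z_{k1,s1} z_{k2,s1 s2} ... x^a
  (c is the accumulated product of the previous indices).\<close>
fun Iw :: "complex \<Rightarrow> word \<Rightarrow> word" where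
  "Iw c [] = []"
| "Iw c (X # w) = X # Iw c w"
| "Iw c (Y t # w) = Y (c * t) # Iw (c * t) w"

definition Imap :: "ncpoly \<Rightarrow> ncpoly" where
  "Imap = lin (\<lambda>w. W (Iw 1 w))"

fun Mw :: "complex \<Rightarrow> word \<Rightarrow> word" where
  "Mw s [] = []"
| "Mw s (X # w) = X # Mw s w"
| "Mw s (Y t # w) = Y (s * t) # w"

definition Mmap :: "complex \<Rightarrow> ncpoly \<Rightarrow> ncpoly" where
  "Mmap s = lin (\<lambda>w. W (Mw s w))"

definition psi :: "complex \<Rightarrow> ncpoly \<Rightarrow> ncpoly" where
  "psi s p = phi (Imap (Mmap s p))"

text \<open>Diamond product on words (v is meant to be a word in x, y = y_1;
  other words in the first argument are given the value 0).\<close>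
function dw :: "complex \<Rightarrow> word \<Rightarrow> word \<Rightarrow> ncpoly" where
  "dw s v w =
    (if v = [] then W w else if w = [] then psi s (phi (W v)) else
     (case last v of
        X \<Rightarrow>
          (case last w of
             X \<Rightarrow> rm (dw s (butlast v) w) X - rm (dw s (butlast v @ [Y 1]) (butlast w)) X
           | Y t \<Rightarrow>
               (if t = 1 then
                  rm (dw s (butlast v) w) X + rm (dw s v (butlast w)) (Y 1)
                else
                  rm (dw s (butlast v) w) X
                  + rm (dw s (butlast v) (butlast w @ [X]) + dw s (butlast v) (butlast w @ [Y t])) (Y t)
                  - rm (dw s (butlast v @ [Y 1]) (butlast w)) (Y t)))
      | Y c \<Rightarrow>
          (if c \<noteq> 1 then 0 else
           (case last w of
              X \<Rightarrow> rm (dw s (butlast v) w) (Y 1) + rm (dw s (butlast v @ [Y 1]) (butlast w)) X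
            | Y t \<Rightarrow>
               (if t = 1 then
                  rm (dw s (butlast v) w) (Y 1) - rm (dw s (butlast v @ [X]) (butlast w)) (Y 1)
                else
                  rm (dw s (butlast v) w) (Y 1)
                  - rm (dw s (butlast v) (butlast w @ [X]) + dw s (butlast v) (butlast w @ [Y t])) (Y t)
                  + rm (dw s (butlast v @ [Y 1]) (butlast w)) (Y t))))))"
  by pat_completeness auto
termination
  by (relation "measure (\<lambda>(s, v, w). length v + length w)") (auto simp: len_pos_aux len_pos_aux2)

definition diamond :: "complex \<Rightarrow> ncpoly \<Rightarrow> ncpoly \<Rightarrow> ncpoly" where
  "diamond s p q = lin (\<lambda>u. lin (\<lambda>v. dw s u v) q) p"

end

theory Submission
  imports Defs
begin


instantiation list :: (type) monoid_add
begin
definition zero_list_def: "(0::'a list) = []"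
definition plus_list_def: "(xs::'a list) + ys = xs @ ys"
instance by standard (auto simp: zero_list_def plus_list_def)
end

lemma W_mult: "W u * W v = W (u @ v)"
  by (simp add: W_def mult_single plus_list_def)

lemma W_Nil: "W [] = 1"
  by (simp add: W_def zero_list_def[symmetric])

definition C :: "rat \<Rightarrow> ncpoly" where "C c = Poly_Mapping.single [] c"

lemma sc_C: "sc c p = C c * p"
  unfolding sc_def C_def zero_list_def[symmetric] by (rule mult_map_scale_conv_mult)

lemma lookup_sc: "Poly_Mapping.lookup (sc c p) w = c * Poly_Mapping.lookup p w"
  unfolding sc_def by (simp add: Poly_Mapping.map.rep_eq when_def)

lemma keys_sc: "Poly_Mapping.keys (sc c p) \<subseteq> Poly_Mapping.keys p"
  by (auto simp: in_keys_iff lookup_sc)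

lemma sc_0[simp]: "sc 0 p = 0" by (simp add: sc_C C_def)
lemma sc_1[simp]: "sc 1 p = p" by (simp add: sc_C C_def zero_list_def[symmetric])
lemma sc_zero[simp]: "sc c 0 = 0" by (simp add: sc_C)
lemma sc_add: "sc c (p + q) = sc c p + sc c q" by (simp add: sc_C distrib_left)
lemma sc_add2: "sc (c + d) p = sc c p + sc d p"
  by (simp add: sc_C C_def single_add distrib_right)
lemma sc_mult: "sc c (sc d p) = sc (c * d) p"
  by (simp add: sc_C C_def mult.assoc[symmetric] mult_single zero_list_def[symmetric])
lemma sc_sum: "sc c (sum f A) = (\<Sum>x\<in>A. sc c (f x))"
  by (simp add: sc_C sum_distrib_left)

lemma lin_superset:
  assumes "finite S" "Poly_Mapping.keys p \<subseteq> S"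
  shows "lin F p = (\<Sum>w\<in>S. sc (Poly_Mapping.lookup p w) (F w))"
  unfolding lin_def
  by (rule sum.mono_neutral_left) (use assms in \<open>auto simp: in_keys_iff\<close>)

lemma lin_add: "lin F (p + q) = lin F p + lin F q"
proof -
  let ?S = "Poly_Mapping.keys p \<union> Poly_Mapping.keys q"
  have f: "finite ?S" by simp
  have k: "Poly_Mapping.keys (p+q) \<subseteq> ?S" by (rule keys_add)
  show ?thesis
    by (simp add: lin_superset[OF f k] lin_superset[OF f, of p] lin_superset[OF f, of q]
        lookup_add sc_add2 sum.distrib)
qed

lemma lin_sc: "lin F (sc c p) = sc c (lin F p)"
proof -
  have "lin F (sc c p) = (\<Sum>w\<in>Poly_Mapping.keys p. sc (Poly_Mapping.lookup (sc c p) w) (F w))"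
    by (rule lin_superset) (auto simp: keys_sc)
  then show ?thesis by (simp add: lin_def sc_sum lookup_sc sc_mult)
qed

lemma lin_zero[simp]: "lin F 0 = 0" by (simp add: lin_def)

lemma lin_W[simp]: "lin F (W u) = F u"
  by (simp add: lin_def W_def)

lemma lin_cong: "(\<And>w. w \<in> Poly_Mapping.keys p \<Longrightarrow> F w = G w) \<Longrightarrow> lin F p = lin G p"
  by (simp add: lin_def)

lemma lin_id: "lin W p = p"
proof (rule poly_mapping_eqI)
  fix k
  have "Poly_Mapping.lookup (lin W p) k = (\<Sum>w\<in>Poly_Mapping.keys p. Poly_Mapping.lookup p w * (if w = k then 1 else 0))"
    by (simp add: lin_def lookup_sum lookup_sc W_def lookup_single when_def)
  also have "\<dots> = Poly_Mapping.lookup p k"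
    by (simp add: if_distrib[of "\<lambda>x. _ * x"] sum.delta in_keys_iff cong: if_cong)
  finally show "Poly_Mapping.lookup (lin W p) k = Poly_Mapping.lookup p k" .
qed

definition linmap :: "(ncpoly \<Rightarrow> ncpoly) \<Rightarrow> bool" where
  "linmap G \<longleftrightarrow> (\<forall>p q. G (p + q) = G p + G q) \<and> (\<forall>c p. G (sc c p) = sc c (G p))"

lemma linmap_lin: "linmap (lin F)" by (simp add: linmap_def lin_add lin_sc)

lemma linmap_0: "linmap G \<Longrightarrow> G 0 = 0"
  unfolding linmap_def by (metis add_cancel_right_right add_0)

lemma linmap_sum: "linmap G \<Longrightarrow> G (sum f A) = (\<Sum>x\<in>A. G (f x))"
  by (induction A rule: infinite_finite_induct) (auto simp: linmap_0, simp add: linmap_def)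

lemma linmap_lin_comp: "linmap G \<Longrightarrow> G (lin F p) = lin (\<lambda>w. G (F w)) p"
  unfolding lin_def by (simp add: linmap_sum) (simp add: linmap_def)

lemma linmap_expand: "linmap G \<Longrightarrow> G p = lin (\<lambda>w. G (W w)) p"
  using linmap_lin_comp[of G W p] by (simp add: lin_id)

lemma linmap_multR: "linmap (\<lambda>p. p * q)"
  by (simp add: linmap_def sc_C distrib_right mult.assoc)

lemma C_W_comm: "C c * W w = W w * C c"
  by (simp add: C_def W_def mult_single plus_list_def)

lemma linmap_sc: "linmap (sc c)"
  by (simp add: linmap_def sc_add sc_mult mult.commute)

lemma C_comm: "p * C c = C c * p"
proof -
  have "p * C c = lin (\<lambda>w. W w * C c) p"
    using linmap_expand[OF linmap_multR, of p "C c"] .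
  also have "\<dots> = lin (\<lambda>w. sc c (W w)) p" by (simp add: C_W_comm sc_C)
  also have "\<dots> = sc c p"
    using linmap_expand[OF linmap_sc, of c p] by simp
  finally show ?thesis by (simp add: sc_C)
qed

lemma linmap_multL: "linmap (\<lambda>q. p * q)"
  by (simp add: linmap_def sc_C distrib_left mult.assoc[symmetric] C_comm)

lemma lin_diff: "lin F (p - q) = lin F p - lin F q"
  by (metis add_diff_cancel lin_add diff_add_cancel)

lemma lin_uminus: "lin F (- p) = - lin F p"
  by (metis diff_0 lin_diff lin_zero)

lemma lin_plusF: "lin (\<lambda>w. F w + G w) p = lin F p + lin G p"
  by (simp add: lin_def sc_add sum.distrib)

lemma lin_minusF: "lin (\<lambda>w. F w - G w) p = lin F p - lin G p"
  by (simp add: lin_def sc_C right_diff_distrib sum_subtractf)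

lemma lin_uminusF: "lin (\<lambda>w. - F w) p = - lin F p"
  by (simp add: lin_def sc_C sum_negf)

lemma lin_multR: "lin (\<lambda>w. F w * q) p = lin F p * q"
  using linmap_lin_comp[of "\<lambda>x. x * q" F p] linmap_multR by simp

lemma lin_multL: "lin (\<lambda>w. q * F w) p = q * lin F p"
  using linmap_lin_comp[of "\<lambda>x. q * x" F p] linmap_multL by simp

lemma lin_comp: "lin G (lin F p) = lin (\<lambda>w. lin G (F w)) p"
  by (rule linmap_lin_comp[OF linmap_lin])

lemma pmul_eq: "pmul p q = p * q"
proof -
  have "pmul p q = lin (\<lambda>u. W u * q) p"
    unfolding pmul_def
    by (rule lin_cong) (simp add: linmap_expand[OF linmap_multL, of "W _" q] W_mult)
  also have "\<dots> = p * q" using linmap_expand[OF linmap_multR, of p q] by simp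
  finally show ?thesis .
qed

lemma rm_eq: "rm p a = p * W [a]" by (simp add: rm_def pmul_eq)

lemma lin_rm: "p * W [a] = lin (\<lambda>w. W (w @ [a])) p"
  using linmap_expand[OF linmap_multR, of p "W [a]"] by (simp add: W_mult)



fun cw :: "word \<Rightarrow> complex" where
  "cw [] = 1"
| "cw (X # w) = cw w"
| "cw (Y t # w) = t * cw w"

lemma cw_append: "cw (u @ v) = cw u * cw v"
  by (induction u rule: cw.induct) auto

lemma Iw_snocX: "Iw c (u @ [X]) = Iw c u @ [X]"
  by (induction c u rule: Iw.induct) auto

lemma Iw_snocY: "Iw c (u @ [Y t]) = Iw c u @ [Y (c * cw u * t)]"
  by (induction c u rule: Iw.induct) (auto simp: mult.assoc)

lemma Mw_snocX: "Mw s (u @ [X]) = Mw s u @ [X]"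
  by (induction s u rule: Mw.induct) auto

lemma IMw_snocX: "Iw c (Mw s (u @ [X])) = Iw c (Mw s u) @ [X]"
  by (simp add: Mw_snocX Iw_snocX)

lemma IMw_snocY: "Iw c (Mw s (u @ [Y t])) = Iw c (Mw s u) @ [Y (c * s * cw u * t)]"
proof (induction u arbitrary: c)
  case Nil then show ?case by simp
next
  case (Cons a u)
  then show ?case
    by (cases a) (auto simp: Iw_snocY mult_ac)
qed

lemma phi_word_snoc: "phi_word (u @ [a]) = phi_word u * phi_letter a"
  by (induction u) (auto simp: pmul_eq W_Nil mult.assoc)

lemma phi_word_append: "phi_word (u @ v) = phi_word u * phi_word v"
  by (induction u) (auto simp: pmul_eq W_Nil mult.assoc)

lemma phi_W: "phi (W u) = phi_word u" by (simp add: phi_def)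

lemma psi_W: "psi s (W u) = phi_word (Iw 1 (Mw s u))"
  by (simp add: psi_def Mmap_def Imap_def phi_def)

lemma psi_lin: "psi s p = lin (\<lambda>u. phi_word (Iw 1 (Mw s u))) p"
  by (simp add: psi_def Mmap_def Imap_def phi_def lin_comp)

lemma linmap_psi: "linmap (psi s)"
  unfolding psi_lin[abs_def] by (rule linmap_lin)

lemma phiL_X: "phi_letter X = W [X] + W [Y 1]" by simp
lemma phiL_Y1: "phi_letter (Y 1) = - W [Y 1]" by (simp add: delta_def)
lemma phiL_Y: "t \<noteq> 1 \<Longrightarrow> phi_letter (Y t) = W [Y t] - W [Y 1]" by (simp add: delta_def)

definition hom :: "complex \<Rightarrow> ncpoly \<Rightarrow> bool" where
  "hom k p \<longleftrightarrow> (\<forall>w\<in>Poly_Mapping.keys p. cw w = k)"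

lemma psi_snocX: "psi s (p * W [X]) = psi s p * phi_letter X"
proof -
  have "psi s (p * W [X]) = lin (\<lambda>w. psi s (W (w @ [X]))) p"
    by (simp add: lin_rm linmap_lin_comp[OF linmap_psi])
  also have "\<dots> = lin (\<lambda>w. psi s (W w) * phi_letter X) p"
    by (simp add: psi_W IMw_snocX phi_word_snoc)
  also have "\<dots> = psi s p * phi_letter X"
    by (simp add: lin_multR linmap_expand[OF linmap_psi, symmetric])
  finally show ?thesis .
qed

lemma psi_snocY: "hom k p \<Longrightarrow> psi s (p * W [Y t]) = psi s p * phi_letter (Y (s * k * t))"
proof -
  assume h: "hom k p"
  have "psi s (p * W [Y t]) = lin (\<lambda>w. psi s (W (w @ [Y t]))) p"
    by (simp add: lin_rm linmap_lin_comp[OF linmap_psi])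
  also have "\<dots> = lin (\<lambda>w. psi s (W w) * phi_letter (Y (s * k * t))) p"
    by (rule lin_cong) (use h in \<open>simp add: hom_def psi_W IMw_snocY phi_word_snoc\<close>)
  also have "\<dots> = psi s p * phi_letter (Y (s * k * t))"
    by (simp add: lin_multR linmap_expand[OF linmap_psi, symmetric])
  finally show ?thesis .
qed



declare hw.simps[simp del] dw.simps[simp del]

lemma hom_W: "hom (cw u) (W u)" by (simp add: hom_def W_def)
lemma hom_0[simp]: "hom k 0" by (simp add: hom_def)
lemma hom_add: "hom k p \<Longrightarrow> hom k q \<Longrightarrow> hom k (p + q)"
  using keys_add[of p q] by (auto simp: hom_def)
lemma hom_diff: "hom k p \<Longrightarrow> hom k q \<Longrightarrow> hom k (p - q)"
  using keys_diff[of p q] by (auto simp: hom_def)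
lemma hom_uminus: "hom k p \<Longrightarrow> hom k (- p)"
  by (auto simp: hom_def)
lemma hom_sc: "hom k p \<Longrightarrow> hom k (sc c p)"
  using keys_sc[of c p] by (auto simp: hom_def)
lemma hom_mult: "hom a p \<Longrightarrow> hom b q \<Longrightarrow> hom (a * b) (p * q)"
  using keys_mult[of p q] by (auto simp: hom_def plus_list_def cw_append)
lemma hom_sum: "(\<And>x. x \<in> A \<Longrightarrow> hom k (f x)) \<Longrightarrow> hom k (sum f A)"
  using keys_sum[of f A] by (auto simp: hom_def)
lemma hom_lin: "(\<And>w. w \<in> Poly_Mapping.keys p \<Longrightarrow> hom k (F w)) \<Longrightarrow> hom k (lin F p)"
  unfolding lin_def by (rule hom_sum) (simp add: hom_sc)
lemma hom_rm: "hom k p \<Longrightarrow> hom (k * cw [a]) (p * W [a])"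
  by (rule hom_mult) (auto simp: hom_W)

lemma hw_Nil1[simp]: "hw [] v = W v" by (subst hw.simps) simp
lemma hw_Nil2[simp]: "hw u [] = W u" by (subst hw.simps) simp

lemma hw_snoc_X_L: "hw (u @ [X]) v = hw u v * W [X]"
  by (cases "v = []") (simp_all add: W_mult hw.simps[of "u @ [X]" v] rm_eq)

lemma hw_snoc_X_L_fun: "hw (u @ [X]) = (\<lambda>v. hw u v * W [X])"
  by (rule ext) (rule hw_snoc_X_L)

lemma hw_snoc_X_R: "hw u (v @ [X]) = hw u v * W [X]"
proof (induction u rule: rev_induct)
  case Nil then show ?case by (simp add: W_mult)
next
  case (snoc a u)
  show ?case
  proof (cases a)
    case X then show ?thesis using snoc by (simp add: hw_snoc_X_L)
  next
    case (Y t) then show ?thesis by (simp add: hw.simps[of "u @ [Y t]" "v @ [X]"] rm_eq)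
  qed
qed

lemma hw_snoc_YY: "hw (u @ [Y a]) (v @ [Y b]) = hw u (v @ [Y b]) * W [Y a] + hw (u @ [Y a]) v * W [Y b]
   + hw u v * W [X] * W [Y (a * b)]"
  by (simp add: hw.simps[of "u @ [Y a]" "v @ [Y b]"] rm_eq)

lemma hw_hom: "hom (cw u * cw v) (hw u v)"
proof (induction u v rule: hw.induct)
  case (1 u v)
  show ?case
  proof (cases "u = [] \<or> v = []")
    case True then show ?thesis by (auto simp: hom_W)
  next
    case False
    then obtain u' a v' b where u: "u = u' @ [a]" and v: "v = v' @ [b]"
      by (metis rev_exhaust)
    show ?thesis
    proof (cases a)
      case X
      have "hom (cw u' * cw v * cw [X]) (hw u' v * W [X])"
        by (rule hom_rm) (use 1(1) u X False in simp)
      then show ?thesis using u X by (simp add: hw_snoc_X_L cw_append mult_ac)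
    next
      case (Y s)
      show ?thesis
      proof (cases b)
        case X
        have "hom (cw u * cw v' * cw [X]) (hw u v' * W [X])"
          by (rule hom_rm) (use 1(2) u v Y X False in simp)
        then show ?thesis using v X by (simp add: hw_snoc_X_R cw_append mult_ac)
      next
        case (Y t)
        note a = \<open>a = letter.Y s\<close>
        have i3: "hom (cw u' * cw v) (hw u' v)" using 1(3) u v a Y False by simp
        have i4: "hom (cw u * cw v') (hw u v')" using 1(4) u v a Y False by simp
        have i5: "hom (cw u' * cw v') (hw u' v')" using 1(5) u v a Y False by simp
        have "hom (cw u' * cw v * cw [Y s]) (hw u' v * W [Y s])" by (rule hom_rm[OF i3])
        moreover have "hom (cw u * cw v' * cw [Y t]) (hw u v' * W [Y t])" by (rule hom_rm[OF i4])
        moreover have "hom (cw u' * cw v' * cw [X] * cw [Y (s*t)]) (hw u' v' * W [X] * W [Y (s*t)])"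
          by (rule hom_rm[OF hom_rm[OF i5]])
        ultimately show ?thesis using u v a Y
          by (simp add: hw_snoc_YY cw_append mult_ac hom_add)
      qed
    qed
  qed
qed

lemma harm_hom: "hom a p \<Longrightarrow> hom b q \<Longrightarrow> hom (a * b) (harm p q)"
  unfolding harm_def hom_def[of a] hom_def[of b]
  by (auto intro!: hom_lin) (metis hw_hom)

lemma harm_1R: "harm p 1 = p"
  by (simp add: harm_def W_Nil[symmetric] lin_id)
lemma hw_Nil_fun: "hw [] = W" by (rule ext) simp

lemma harm_1L: "harm 1 q = q"
  by (simp add: harm_def W_Nil[symmetric] lin_id hw_Nil_fun)

lemma harm_XL: "harm (p * W [X]) q = harm p q * W [X]"
proof -
  have "harm (p * W [X]) q = lin (\<lambda>u. lin (hw u) q) (lin (\<lambda>w. W (w @ [X])) p)"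
    by (simp only: harm_def lin_rm)
  also have "\<dots> = lin (\<lambda>u. lin (\<lambda>v. hw u v * W [X]) q) p"
    by (simp add: lin_comp hw_snoc_X_L_fun)
  also have "\<dots> = harm p q * W [X]"
    by (simp add: harm_def lin_multR)
  finally show ?thesis .
qed

lemma harm_XR: "harm p (q * W [X]) = harm p q * W [X]"
proof -
  have "harm p (q * W [X]) = lin (\<lambda>u. lin (hw u) (lin (\<lambda>w. W (w @ [X])) q)) p"
    by (simp only: harm_def lin_rm)
  also have "\<dots> = lin (\<lambda>u. lin (\<lambda>v. hw u v * W [X]) q) p"
    by (simp add: lin_comp hw_snoc_X_R)
  also have "\<dots> = harm p q * W [X]"
    by (simp add: harm_def lin_multR)
  finally show ?thesis .
qed

lemma harm_YY: "harm (p * W [Y a]) (q * W [Y b]) = harm p (q * W [Y b]) * W [Y a]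
   + harm (p * W [Y a]) q * W [Y b] + harm p q * W [X] * W [Y (a * b)]"
proof -
  have e1: "harm p (q * W [Y b]) = lin (\<lambda>u. lin (\<lambda>v. hw u (v @ [Y b])) q) p"
    by (simp only: harm_def lin_rm lin_comp lin_W)
  have e2: "harm (p * W [Y a]) q = lin (\<lambda>u. lin (\<lambda>v. hw (u @ [Y a]) v) q) p"
    by (simp only: harm_def lin_rm lin_comp lin_W)
  have "harm (p * W [Y a]) (q * W [Y b]) = lin (\<lambda>u. lin (\<lambda>v. hw (u @ [Y a]) (v @ [Y b])) q) p"
    by (simp only: harm_def lin_rm lin_comp lin_W)
  also have "\<dots> = lin (\<lambda>u. lin (\<lambda>v. hw u (v @ [Y b])) q * W [Y a]
      + lin (\<lambda>v. hw (u @ [Y a]) v) q * W [Y b] + lin (hw u) q * W [X] * W [Y (a * b)]) p"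
    by (simp add: hw_snoc_YY lin_plusF lin_multR)
  also have "\<dots> = harm p (q * W [Y b]) * W [Y a]
   + harm (p * W [Y a]) q * W [Y b] + harm p q * W [X] * W [Y (a * b)]"
    unfolding e1 e2 by (simp add: harm_def lin_plusF lin_multR)
  finally show ?thesis .
qed

lemma harm_addL: "harm (p + p') q = harm p q + harm p' q"
  by (simp add: harm_def lin_add)
lemma harm_uminusL: "harm (- p) q = - harm p q"
  by (simp add: harm_def lin_uminus)



lemma dw_XX: "dw s (v @ [X]) (w @ [X]) = dw s v (w @ [X]) * W [X] - dw s (v @ [Y 1]) w * W [X]"
  by (simp add: dw.simps[of s "v @ [X]" "w @ [X]"] rm_eq)
lemma dw_XY1: "dw s (v @ [X]) (w @ [Y 1]) = dw s v (w @ [Y 1]) * W [X] + dw s (v @ [X]) w * W [Y 1]"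
  by (simp add: dw.simps[of s "v @ [X]" "w @ [Y 1]"] rm_eq)
lemma dw_XYt: "t \<noteq> 1 \<Longrightarrow> dw s (v @ [X]) (w @ [Y t]) = dw s v (w @ [Y t]) * W [X]
   + (dw s v (w @ [X]) + dw s v (w @ [Y t])) * W [Y t] - dw s (v @ [Y 1]) w * W [Y t]"
  by (simp add: dw.simps[of s "v @ [X]" "w @ [Y t]"] rm_eq)
lemma dw_YX: "dw s (v @ [Y 1]) (w @ [X]) = dw s v (w @ [X]) * W [Y 1] + dw s (v @ [Y 1]) w * W [X]"
  by (simp add: dw.simps[of s "v @ [Y 1]" "w @ [X]"] rm_eq)
lemma dw_YY1: "dw s (v @ [Y 1]) (w @ [Y 1]) = dw s v (w @ [Y 1]) * W [Y 1] - dw s (v @ [X]) w * W [Y 1]"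
  by (simp add: dw.simps[of s "v @ [Y 1]" "w @ [Y 1]"] rm_eq)
lemma dw_YYt: "t \<noteq> 1 \<Longrightarrow> dw s (v @ [Y 1]) (w @ [Y t]) = dw s v (w @ [Y t]) * W [Y 1]
   - (dw s v (w @ [X]) + dw s v (w @ [Y t])) * W [Y t] + dw s (v @ [Y 1]) w * W [Y t]"
  by (simp add: dw.simps[of s "v @ [Y 1]" "w @ [Y t]"] rm_eq)
lemma dw_Nil1: "dw s [] w = W w"
  by (simp add: dw.simps[of s "[]" w])
lemma dw_Nil2: "dw s v [] = psi s (phi (W v))"
  by (cases "v = []") (simp_all add: dw_Nil1 dw.simps[of s v "[]"] psi_W phi_W)

definition dwp :: "complex \<Rightarrow> word \<Rightarrow> ncpoly \<Rightarrow> ncpoly" where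
  "dwp s v q = lin (dw s v) q"

lemma lin_rm2: "lin F (q * W [b]) = lin (\<lambda>w. F (w @ [b])) q"
  by (simp only: lin_rm lin_comp lin_W)

lemma dwp_rm: "dwp s v (q * W [b]) = lin (\<lambda>w. dw s v (w @ [b])) q"
  by (simp only: dwp_def lin_rm lin_comp lin_W)

lemma dwp_fun: "dwp s v q = lin (\<lambda>w. dw s v w) q"
  by (simp add: dwp_def)

lemma linmap_dwp: "linmap (dwp s v)"
  unfolding dwp_def by (rule linmap_lin)

lemma dwp_add: "dwp s v (p + q) = dwp s v p + dwp s v q"
  by (simp add: dwp_def lin_add)
lemma dwp_diff: "dwp s v (p - q) = dwp s v p - dwp s v q"
  by (simp add: dwp_def lin_diff)
lemma dwp_uminus: "dwp s v (- p) = - dwp s v p"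
  by (simp add: dwp_def lin_uminus)

lemma D1: "dwp s (v @ [X]) (q * W [X]) = dwp s v (q * W [X]) * W [X] - dwp s (v @ [Y 1]) q * W [X]"
  by (simp add: dwp_def lin_rm2 dw_XX lin_minusF lin_multR)
lemma D2: "dwp s (v @ [X]) (q * W [Y 1]) = dwp s v (q * W [Y 1]) * W [X] + dwp s (v @ [X]) q * W [Y 1]"
  by (simp add: dwp_def lin_rm2 dw_XY1 lin_plusF lin_multR)
lemma D3: "t \<noteq> 1 \<Longrightarrow> dwp s (v @ [X]) (q * W [Y t]) = dwp s v (q * W [Y t]) * W [X]
   + (dwp s v (q * W [X]) + dwp s v (q * W [Y t])) * W [Y t] - dwp s (v @ [Y 1]) q * W [Y t]"
  by (simp add: dwp_def lin_rm2 dw_XYt lin_plusF lin_minusF lin_multR)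
lemma D4: "dwp s (v @ [Y 1]) (q * W [X]) = dwp s v (q * W [X]) * W [Y 1] + dwp s (v @ [Y 1]) q * W [X]"
  by (simp add: dwp_def lin_rm2 dw_YX lin_plusF lin_multR)
lemma D5: "dwp s (v @ [Y 1]) (q * W [Y 1]) = dwp s v (q * W [Y 1]) * W [Y 1] - dwp s (v @ [X]) q * W [Y 1]"
  by (simp add: dwp_def lin_rm2 dw_YY1 lin_minusF lin_multR)
lemma D6: "t \<noteq> 1 \<Longrightarrow> dwp s (v @ [Y 1]) (q * W [Y t]) = dwp s v (q * W [Y t]) * W [Y 1]
   - (dwp s v (q * W [X]) + dwp s v (q * W [Y t])) * W [Y t] + dwp s (v @ [Y 1]) q * W [Y t]"
  by (simp add: dwp_def lin_rm2 dw_YYt lin_plusF lin_minusF lin_multR)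

lemma dwp_Nil1: "dwp s [] q = q"
proof -
  have "dw s [] = W" by (rule ext) (rule dw_Nil1)
  then show ?thesis by (simp add: dwp_def lin_id)
qed



definition nz :: "word \<Rightarrow> bool" where "nz u \<longleftrightarrow> (\<forall>t. Y t \<in> set u \<longrightarrow> t \<noteq> 0)"

lemma nz_cw: "nz u \<Longrightarrow> cw u \<noteq> 0"
  by (induction u rule: cw.induct) (auto simp: nz_def)

lemma nz_snoc: "nz (u @ [a]) \<longleftrightarrow> nz u \<and> (\<forall>t. a = Y t \<longrightarrow> t \<noteq> 0)"
  by (auto simp: nz_def)

lemma hom_phi_word: "set v \<subseteq> {X, Y 1} \<Longrightarrow> hom 1 (phi_word v)"
proof (induction v)
  case Nil then show ?case using hom_W[of "[]"] by simp
next
  case (Cons a v)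
  have ha: "hom 1 (phi_letter a)"
  proof -
    have hx: "hom 1 (W [X])" using hom_W[of "[X]"] by simp
    have hy: "hom 1 (W [Y 1])" using hom_W[of "[Y 1]"] by simp
    have "a = X \<or> a = Y 1" using Cons(2) by auto
    then show ?thesis
    proof
      assume "a = X" then show ?thesis using hom_add[OF hx hy] by simp
    next
      assume "a = Y 1" then show ?thesis using hom_uminus[OF hy] by (simp only: phiL_Y1)
    qed
  qed
  show ?case using hom_mult[OF ha Cons(1)] Cons(2) by (simp add: pmul_eq)
qed

lemma psi_Nil: "psi s (W []) = W []" by (simp add: psi_W)

lemma psi_add: "psi s (p + q) = psi s p + psi s q"
  by (simp only: psi_lin lin_add)
lemma psi_uminus: "psi s (- p) = - psi s p"
  by (simp only: psi_lin lin_uminus)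



declare phi_letter.simps[simp del]

lemma main_word:
  assumes s0: "s \<noteq> 0"
  shows "set v \<subseteq> {X, Y 1} \<Longrightarrow> nz u \<Longrightarrow> dwp s v (psi s (W u)) = psi s (harm (phi_word v) (W u))"
proof (induction "length v + length u" arbitrary: v u rule: less_induct)
  case less
  show ?case
  proof (cases "v = []")
    case True then show ?thesis by (simp add: dwp_Nil1 W_Nil harm_1L)
  next
    case vne: False
    show ?thesis
    proof (cases "u = []")
      case True
      have "dwp s v (psi s (W u)) = psi s (phi_word v)"
        using True by (simp add: psi_Nil dwp_def dw_Nil2 phi_W)
      also have "\<dots> = psi s (harm (phi_word v) (W u))"
        using True by (simp add: W_Nil harm_1R)
      finally show ?thesis .
    next
      case une: False
      obtain v' a where v: "v = v' @ [a]" using vne by (metis rev_exhaust)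
      obtain u' b where u: "u = u' @ [b]" using une by (metis rev_exhaust)
      have va: "set v' \<subseteq> {X, Y 1}" "a = X \<or> a = Y 1" using less.prems(1) v by auto
      have nzu': "nz u'" and nzb: "\<And>t. b = Y t \<Longrightarrow> t \<noteq> 0" using less.prems(2) u nz_snoc by auto
      define P where "P = phi_word v'"
      define K where "K = W u'"
      define kk where "kk = cw u'"
      define ll where "ll = s * kk"
      define q where "q = psi s K"
      define h0 where "h0 = psi s (harm P K)"
      define e where "e = psi s (harm (P * W [Y 1]) K)"
      define g where "g = (\<lambda>c. psi s (harm P (K * W [Y c])))"
      have kk0: "kk \<noteq> 0" using nz_cw nzu' kk_def by simp
      have ll0: "ll \<noteq> 0" using s0 kk0 ll_def by simp
      have hP: "hom 1 P" using hom_phi_word va(1) P_def by simp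
      have hK: "hom kk K" using hom_W kk_def K_def by simp
      have hPY: "hom 1 (P * W [Y 1])" using hom_rm[OF hP, of "Y 1"] by simp
      have hPK: "hom kk (harm P K)" using harm_hom[OF hP hK] by simp
      have hPYK: "hom kk (harm (P * W [Y 1]) K)" using harm_hom[OF hPY hK] by simp
      have hPKX: "hom kk (harm P K * W [X])" using hom_rm[OF hPK, of X] by simp
      have hPKY: "hom (kk * t) (harm P (K * W [Y t]))" for t
        using harm_hom[OF hP hom_rm[OF hK, of "Y t"]] by simp
      have phiv: "phi_word v = P * phi_letter a" using v P_def phi_word_snoc by simp
      have Wu: "W u = K * W [b]" using u K_def W_mult by simp
      have WX: "W (u' @ [X]) = K * W [X]" using K_def W_mult by simp
      have WY: "\<And>c. W (u' @ [Y c]) = K * W [Y c]" using K_def W_mult by simp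
      have psiX: "psi s (K * W [X]) = q * phi_letter X" using psi_snocX q_def by simp
      have psiY: "\<And>c. psi s (K * W [Y c]) = q * phi_letter (Y (ll * c))"
        using psi_snocY[OF hK] q_def ll_def by simp
      have IH1: "dwp s v' (psi s (K * W [Y c])) = g c" if "c \<noteq> 0" for c
      proof -
        have "dwp s v' (psi s (W (u' @ [Y c]))) = psi s (harm (phi_word v') (W (u' @ [Y c])))"
          by (rule less.hyps) (use v u va nzu' that in \<open>auto simp: nz_snoc\<close>)
        then show ?thesis by (simp only: g_def P_def WY)
      qed
      have IH2: "dwp s v' (q * phi_letter X) = h0 * phi_letter X"
      proof -
        have "dwp s v' (psi s (W (u' @ [X]))) = psi s (harm (phi_word v') (W (u' @ [X])))"
          by (rule less.hyps) (use v u va nzu' in \<open>auto simp: nz_snoc\<close>)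
        then show ?thesis by (simp only: WX psiX harm_XR psi_snocX h0_def P_def q_def)
      qed
      have R3: "psi s (harm (P * phi_letter X) K) = h0 * phi_letter X + e"
        by (simp only: phiL_X distrib_left harm_addL psi_add harm_XL psi_snocX h0_def e_def)
      have R4: "psi s (harm (P * phi_letter (Y 1)) K) = - e"
        by (simp only: phiL_Y1 mult_minus_right harm_uminusL psi_uminus e_def)
      have IH3: "dwp s (v' @ [X]) q = h0 * phi_letter X + e"
      proof -
        have "dwp s (v' @ [X]) (psi s (W u')) = psi s (harm (phi_word (v' @ [X])) (W u'))"
          by (rule less.hyps) (use v u va nzu' in \<open>auto\<close>)
        then show ?thesis by (simp only: phi_word_snoc R3 q_def[symmetric] K_def[symmetric] P_def[symmetric])
      qed
      have IH4: "dwp s (v' @ [Y 1]) q = - e"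
      proof -
        have "dwp s (v' @ [Y 1]) (psi s (W u')) = psi s (harm (phi_word (v' @ [Y 1])) (W u'))"
          by (rule less.hyps) (use v u va nzu' in \<open>auto\<close>)
        then show ?thesis by (simp only: phi_word_snoc R4 q_def[symmetric] K_def[symmetric] P_def[symmetric])
      qed
      define c1 where "c1 = 1 / ll"
      have c1: "ll * c1 = 1" "c1 \<noteq> 0" using ll0 c1_def by auto
      have dY1: "dwp s v' (q * W [Y 1]) = - g c1"
      proof -
        have "dwp s v' (q * phi_letter (Y 1)) = g c1" using IH1[OF c1(2)] psiY[of c1] c1(1) by simp
        then have "- dwp s v' (q * W [Y 1]) = g c1" by (simp only: phiL_Y1 mult_minus_right dwp_uminus)
        then show ?thesis by (metis minus_minus)
      qed
      have dX: "dwp s v' (q * W [X]) = h0 * phi_letter X + g c1"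
      proof -
        have "dwp s v' (q * W [X]) + dwp s v' (q * W [Y 1]) = h0 * phi_letter X"
          using IH2 by (simp only: phiL_X distrib_left dwp_add)
        then show ?thesis using dY1 by (simp add: algebra_simps)
      qed
      have dYt: "dwp s v' (q * W [Y tt]) = g (tt / ll) - g c1" if "tt \<noteq> 1" "tt \<noteq> 0" for tt
      proof -
        have "tt / ll \<noteq> 0" using that ll0 by simp
        from IH1[OF this] have "dwp s v' (q * phi_letter (Y tt)) = g (tt / ll)"
          using psiY[of "tt / ll"] ll0 by simp
        then have "dwp s v' (q * W [Y tt]) - dwp s v' (q * W [Y 1]) = g (tt / ll)"
          by (simp only: phiL_Y[OF that(1)] right_diff_distrib dwp_diff)
        then show ?thesis using dY1 by (simp add: algebra_simps)
      qed
      show ?thesis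
      proof (cases b)
        case X
        have L: "dwp s v (psi s (W u)) = dwp s v (q * W [X]) + dwp s v (q * W [Y 1])"
          by (simp only: Wu X psiX phiL_X distrib_left dwp_add)
        have R: "psi s (harm (phi_word v) (W u)) = psi s (harm (P * phi_letter a) K) * phi_letter X"
          by (simp only: Wu X phiv harm_XR psi_snocX)
        from va(2) show ?thesis
        proof
          assume a: "a = X"
          show ?thesis unfolding L R a R3 using v a
            by (simp add: D1 D2 dX dY1 IH3 IH4 phiL_X algebra_simps)
        next
          assume a: "a = Y 1"
          show ?thesis unfolding L R a R4 using v a
            by (simp add: D4 D5 dX dY1 IH3 IH4 phiL_X algebra_simps)
        qed
      next
        case (Y t)
        have t0: "t \<noteq> 0" using nzb Y by simp
        define tt where "tt = ll * t"
        have tt0: "tt \<noteq> 0" using t0 ll0 tt_def by simp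
        have gt: "g (tt / ll) = g t" using ll0 tt_def by simp
        have L: "dwp s v (psi s (W u)) = dwp s v (q * phi_letter (Y tt))"
          by (simp only: Wu Y psiY tt_def)
        have RX: "psi s (harm (P * W [X]) (K * W [Y t])) = g t * phi_letter X"
          by (simp only: harm_XL psi_snocX g_def)
        have RY: "psi s (harm (P * W [Y 1]) (K * W [Y t])) =
            g t * phi_letter (Y tt) + e * phi_letter (Y tt) + h0 * phi_letter X * phi_letter (Y tt)"
        proof -
          have e1: "psi s (harm P (K * W [Y t]) * W [Y 1]) = g t * phi_letter (Y tt)"
            using psi_snocY[OF hPKY[of t], of s 1] by (simp add: g_def tt_def ll_def mult_ac)
          have e2: "psi s (harm (P * W [Y 1]) K * W [Y t]) = e * phi_letter (Y tt)"
            using psi_snocY[OF hPYK, of s t] by (simp add: e_def tt_def ll_def mult_ac)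
          have e3: "psi s (harm P K * W [X] * W [Y t]) = h0 * phi_letter X * phi_letter (Y tt)"
            using psi_snocY[OF hPKX, of s t] by (simp add: psi_snocX h0_def tt_def ll_def mult_ac)
          show ?thesis using e1 e2 e3 by (simp only: harm_YY psi_add mult_1_left)
        qed
        have R: "psi s (harm (phi_word v) (W u)) = psi s (harm (P * phi_letter a) (K * W [Y t]))"
          by (simp only: Wu Y phiv)
        show ?thesis
        proof (cases "tt = 1")
          case True
          have tc: "t = c1" using True ll0 unfolding tt_def c1_def by (auto simp: field_simps)
          have L1: "dwp s v (psi s (W u)) = - dwp s v (q * W [Y 1])"
            unfolding L True by (simp only: phiL_Y1 mult_minus_right dwp_uminus)
          from va(2) show ?thesis
          proof
            assume a: "a = X"
            have R1: "psi s (harm (phi_word v) (W u)) = g t * phi_letter X +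
              (g t * phi_letter (Y tt) + e * phi_letter (Y tt) + h0 * phi_letter X * phi_letter (Y tt))"
              unfolding R a by (simp only: phiL_X distrib_left harm_addL psi_add RX RY)
            show ?thesis unfolding L1 R1 using a v True tc
              by (simp add: D2 dY1 IH3 phiL_X phiL_Y1 algebra_simps)
          next
            assume a: "a = Y 1"
            have R1: "psi s (harm (phi_word v) (W u)) =
              - (g t * phi_letter (Y tt) + e * phi_letter (Y tt) + h0 * phi_letter X * phi_letter (Y tt))"
              unfolding R a by (simp only: phiL_Y1 mult_minus_right harm_uminusL psi_uminus RY)
            show ?thesis unfolding L1 R1 using a v True tc
              by (simp add: D5 dY1 IH3 phiL_X phiL_Y1 algebra_simps)
          qed
        next
          case False
          have L1: "dwp s v (psi s (W u)) = dwp s v (q * W [Y tt]) - dwp s v (q * W [Y 1])"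
            unfolding L by (simp only: phiL_Y[OF False] right_diff_distrib dwp_diff)
          have pY: "phi_letter (Y tt) = W [Y tt] - W [Y 1]" using False by (rule phiL_Y)
          have dT: "dwp s v' (q * W [Y tt]) = g t - g c1" using dYt[OF False tt0] gt by simp
          from va(2) show ?thesis
          proof
            assume a: "a = X"
            have R1: "psi s (harm (phi_word v) (W u)) = g t * phi_letter X +
              (g t * phi_letter (Y tt) + e * phi_letter (Y tt) + h0 * phi_letter X * phi_letter (Y tt))"
              unfolding R a by (simp only: phiL_X distrib_left harm_addL psi_add RX RY)
            show ?thesis unfolding L1 R1 using a v False
              by (simp add: D3 D2 dY1 dX dT IH3 IH4 pY phiL_X algebra_simps)
          next
            assume a: "a = Y 1"
            have R1: "psi s (harm (phi_word v) (W u)) =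
              - (g t * phi_letter (Y tt) + e * phi_letter (Y tt) + h0 * phi_letter X * phi_letter (Y tt))"
              unfolding R a by (simp only: phiL_Y1 mult_minus_right harm_uminusL psi_uminus RY)
            show ?thesis unfolding L1 R1 using a v False
              by (simp add: D6 D5 dY1 dX dT IH3 IH4 pY phiL_X algebra_simps)
          qed
        qed
      qed
    qed
  qed
qed



lemma linmap_comp: "linmap F \<Longrightarrow> linmap G \<Longrightarrow> linmap (\<lambda>x. F (G x))"
  by (simp add: linmap_def)

lemma linmap_harmR: "linmap (harm p)"
proof -
  have "harm p = (\<lambda>q. lin (\<lambda>u. lin (hw u) q) p)" by (rule ext) (simp add: harm_def)
  moreover have "linmap (\<lambda>q. lin (\<lambda>u. lin (hw u) q) p)"
    unfolding linmap_def
  proof (intro conjI allI)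
    fix q1 q2 show "lin (\<lambda>u. lin (hw u) (q1 + q2)) p = lin (\<lambda>u. lin (hw u) q1) p + lin (\<lambda>u. lin (hw u) q2) p"
      by (simp add: lin_add lin_plusF)
  next
    fix c q show "lin (\<lambda>u. lin (hw u) (sc c q)) p = sc c (lin (\<lambda>u. lin (hw u) q) p)"
      using linmap_lin_comp[OF linmap_sc, of c "\<lambda>u. lin (hw u) q" p] by (simp add: lin_sc)
  qed
  ultimately show ?thesis by simp
qed

definition good :: "nat \<Rightarrow> word \<Rightarrow> bool" where
  "good r w \<longleftrightarrow> (\<forall>t. Y t \<in> set w \<longrightarrow> t \<in> mu r)"

lemma mu_mult: "a \<in> mu r \<Longrightarrow> b \<in> mu r \<Longrightarrow> a * b \<in> mu r"
  by (simp add: mu_def power_mult_distrib)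
lemma mu_div: "a \<in> mu r \<Longrightarrow> b \<in> mu r \<Longrightarrow> a / b \<in> mu r"
  by (simp add: mu_def power_divide)
lemma mu_1: "1 \<in> mu r" by (simp add: mu_def)
lemma mu_nz: "r \<ge> 1 \<Longrightarrow> a \<in> mu r \<Longrightarrow> a \<noteq> 0"
  unfolding mu_def by (cases r) auto

lemma good_cw: "good r u \<Longrightarrow> cw u \<in> mu r"
  by (induction u rule: cw.induct) (auto simp: good_def mu_1 mu_mult)

lemma good_nz: "r \<ge> 1 \<Longrightarrow> good r u \<Longrightarrow> nz u"
  unfolding good_def nz_def using mu_nz by blast

lemma Alg_iff: "p \<in> Alg r \<longleftrightarrow> (\<forall>w\<in>Poly_Mapping.keys p. good r w)"
  by (auto simp: Alg_def good_def)

lemma Alg_add: "p \<in> Alg r \<Longrightarrow> q \<in> Alg r \<Longrightarrow> p + q \<in> Alg r"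
  using keys_add[of p q] by (auto simp: Alg_iff)
lemma Alg_diff: "p \<in> Alg r \<Longrightarrow> q \<in> Alg r \<Longrightarrow> p - q \<in> Alg r"
  using keys_diff[of p q] by (auto simp: Alg_iff)
lemma Alg_uminus: "p \<in> Alg r \<Longrightarrow> - p \<in> Alg r"
  by (auto simp: Alg_iff)
lemma Alg_W: "good r w \<Longrightarrow> W w \<in> Alg r"
  by (simp add: Alg_iff W_def)
lemma Alg_lin: "(\<And>w. w \<in> Poly_Mapping.keys p \<Longrightarrow> F w \<in> Alg r) \<Longrightarrow> lin F p \<in> Alg r"
proof -
  assume h: "\<And>w. w \<in> Poly_Mapping.keys p \<Longrightarrow> F w \<in> Alg r"
  have "Poly_Mapping.keys (lin F p) \<subseteq> (\<Union>w\<in>Poly_Mapping.keys p. Poly_Mapping.keys (sc (Poly_Mapping.lookup p w) (F w)))"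
    unfolding lin_def by (rule keys_sum)
  also have "\<dots> \<subseteq> (\<Union>w\<in>Poly_Mapping.keys p. Poly_Mapping.keys (F w))"
    using keys_sc by blast
  finally show ?thesis using h by (auto simp: Alg_iff)
qed

lemma psi_mult_W: "psi s p * W [a] = lin (\<lambda>u. psi s (W u) * W [a]) p"
  by (simp add: lin_multR linmap_expand[OF linmap_psi, symmetric])

lemma step_word:
  assumes r: "r \<ge> 1" and s: "s \<in> mu r" and gu: "good r u" and ga: "good r [a]"
  shows "\<exists>g\<in>Alg r. psi s (W u) * W [a] = psi s g"
proof -
  define ll where "ll = s * cw u"
  have llm: "ll \<in> mu r" using mu_mult[OF s good_cw[OF gu]] ll_def by simp
  have ll0: "ll \<noteq> 0" using mu_nz[OF r llm] .
  have hK: "hom (cw u) (W u)" by (rule hom_W)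
  have psiY: "psi s (W (u @ [Y c])) = psi s (W u) * phi_letter (Y (ll * c))" for c
    using psi_snocY[OF hK, of s c] by (simp add: W_mult[symmetric] ll_def)
  have psiX: "psi s (W (u @ [X])) = psi s (W u) * phi_letter X"
    using psi_snocX[of s "W u"] by (simp add: W_mult[symmetric])
  have gY: "good r (u @ [Y c])" if "c \<in> mu r" for c using gu that by (auto simp: good_def)
  have gX: "good r (u @ [X])" using gu by (auto simp: good_def)
  have i1: "1 / ll \<in> mu r" by (rule mu_div[OF mu_1 llm])
  have e1: "psi s (W (u @ [Y (1 / ll)])) = - (psi s (W u) * W [Y 1])"
    using psiY[of "1 / ll"] ll0 by (simp add: phiL_Y1)
  show ?thesis
  proof (cases a)
    case X
    have "psi s (W u) * W [a] = psi s (W (u @ [X]) + W (u @ [Y (1 / ll)]))"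
      using X by (simp add: psi_add psiX e1 phiL_X distrib_left)
    moreover have "W (u @ [X]) + W (u @ [Y (1 / ll)]) \<in> Alg r"
      by (intro Alg_add Alg_W gX gY i1)
    ultimately show ?thesis by blast
  next
    case (Y t)
    have tm: "t \<in> mu r" using ga Y by (simp add: good_def)
    show ?thesis
    proof (cases "t = 1")
      case True
      have "psi s (W u) * W [a] = psi s (- W (u @ [Y (1 / ll)]))"
        using Y True by (simp add: psi_uminus e1)
      moreover have "- W (u @ [Y (1 / ll)]) \<in> Alg r" by (intro Alg_uminus Alg_W gY i1)
      ultimately show ?thesis by blast
    next
      case False
      have e2: "psi s (W (u @ [Y (t / ll)])) = psi s (W u) * W [Y t] - psi s (W u) * W [Y 1]"
        using psiY[of "t / ll"] ll0 False by (simp add: phiL_Y right_diff_distrib)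
      have "psi s (W u) * W [a] = psi s (W (u @ [Y (t / ll)]) - W (u @ [Y (1 / ll)]))"
        using Y by (simp only: psi_lin lin_diff) (simp add: psi_lin[symmetric] e1 e2)
      moreover have "W (u @ [Y (t / ll)]) - W (u @ [Y (1 / ll)]) \<in> Alg r"
        by (intro Alg_diff Alg_W gY i1 mu_div tm llm)
      ultimately show ?thesis by blast
    qed
  qed
qed

lemma surj_word:
  assumes r: "r \<ge> 1" and s: "s \<in> mu r"
  shows "good r w \<Longrightarrow> \<exists>x\<in>Alg r. psi s x = W w"
proof (induction w rule: rev_induct)
  case Nil
  have g: "good r []" by (simp add: good_def)
  show ?case by (rule bexI[of _ "W []"]) (rule psi_Nil, rule Alg_W[OF g])
next
  case (snoc a w)
  have gw: "good r w" and ga: "good r [a]" using snoc(2) by (auto simp: good_def)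
  obtain x where x: "x \<in> Alg r" "psi s x = W w" using snoc(1)[OF gw] by blast
  define G where "G = (\<lambda>u. SOME g. g \<in> Alg r \<and> psi s (W u) * W [a] = psi s g)"
  have G: "G u \<in> Alg r \<and> psi s (W u) * W [a] = psi s (G u)" if "u \<in> Poly_Mapping.keys x" for u
  proof -
    have "good r u" using x(1) that by (simp add: Alg_iff)
    from step_word[OF r s this ga] have "\<exists>g. g \<in> Alg r \<and> psi s (W u) * W [a] = psi s g" by blast
    then show ?thesis unfolding G_def by (rule someI_ex)
  qed
  have "W (w @ [a]) = psi s x * W [a]" using x(2) by (simp add: W_mult)
  also have "\<dots> = lin (\<lambda>u. psi s (G u)) x"
    unfolding psi_mult_W[of s x a] by (rule lin_cong) (erule G[THEN conjunct2])
  also have "\<dots> = psi s (lin G x)"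
    by (rule linmap_lin_comp[OF linmap_psi, symmetric])
  finally have "psi s (lin G x) = W (w @ [a])" by simp
  moreover have "lin G x \<in> Alg r" by (rule Alg_lin) (erule G[THEN conjunct1])
  ultimately show ?case by blast
qed

lemma surj_Alg:
  assumes r: "r \<ge> 1" and s: "s \<in> mu r" and w: "w \<in> Alg r"
  shows "w \<in> psi s ` Alg r"
proof -
  define G where "G = (\<lambda>u. SOME x. x \<in> Alg r \<and> psi s x = W u)"
  have G: "G u \<in> Alg r \<and> psi s (G u) = W u" if "u \<in> Poly_Mapping.keys w" for u
  proof -
    have "good r u" using w that by (simp add: Alg_iff)
    from surj_word[OF r s this] have "\<exists>x. x \<in> Alg r \<and> psi s x = W u" by blast
    then show ?thesis unfolding G_def by (rule someI_ex)
  qed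
  have "psi s (lin G w) = lin (\<lambda>u. psi s (G u)) w" by (rule linmap_lin_comp[OF linmap_psi])
  also have "\<dots> = lin W w" by (rule lin_cong) (erule G[THEN conjunct2])
  also have "\<dots> = w" by (rule lin_id)
  finally have "psi s (lin G w) = w" .
  moreover have "lin G w \<in> Alg r" by (rule Alg_lin) (erule G[THEN conjunct1])
  ultimately show ?thesis by (metis image_eqI)
qed

lemma dwp_psi:
  assumes s0: "s \<noteq> 0" and v: "set v \<subseteq> {X, Y 1}" and x: "\<And>u. u \<in> Poly_Mapping.keys x \<Longrightarrow> nz u"
  shows "dwp s v (psi s x) = psi s (harm (phi_word v) x)"
proof -
  have "dwp s v (psi s x) = dwp s v (lin (\<lambda>u. psi s (W u)) x)"
    by (simp add: linmap_expand[OF linmap_psi, symmetric])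
  also have "\<dots> = lin (\<lambda>u. dwp s v (psi s (W u))) x"
    by (rule linmap_lin_comp[OF linmap_dwp])
  also have "\<dots> = lin (\<lambda>u. psi s (harm (phi_word v) (W u))) x"
    by (rule lin_cong) (rule main_word[OF s0 v x])
  also have "\<dots> = psi s (harm (phi_word v) x)"
    by (rule linmap_expand[OF linmap_comp[OF linmap_psi linmap_harmR], symmetric])
  finally show ?thesis .
qed



lemma linmap_harmL: "linmap (\<lambda>p. harm p x)"
proof -
  have "(\<lambda>p. harm p x) = lin (\<lambda>u. lin (hw u) x)" by (rule ext) (simp add: harm_def)
  then show ?thesis by (simp add: linmap_lin)
qed

theorem mainTheorem9:
  fixes r :: nat and s :: complex and v w :: ncpoly
  assumes "r \<ge> 1" and "s \<in> mu r" and "v \<in> Alg1" and "w \<in> Alg r"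
  shows "diamond s v w = psi s (harm (phi v) (inv_into (Alg r) (psi s) w))"
proof -
  have s0: "s \<noteq> 0" using mu_nz assms(1,2) by blast
  define x where "x = inv_into (Alg r) (psi s) w"
  have wi: "w \<in> psi s ` Alg r" by (rule surj_Alg[OF assms(1,2,4)])
  have xA: "x \<in> Alg r" unfolding x_def by (rule inv_into_into[OF wi])
  have px: "psi s x = w" unfolding x_def by (rule f_inv_into_f[OF wi])
  have nzx: "nz u" if "u \<in> Poly_Mapping.keys x" for u
    using xA that good_nz[OF assms(1)] by (simp add: Alg_iff)
  have vk: "set u \<subseteq> {X, Y 1}" if "u \<in> Poly_Mapping.keys v" for u
    using assms(3) that by (simp add: Alg1_def)
  have "diamond s v w = lin (\<lambda>u. dwp s u w) v" by (simp add: diamond_def dwp_def)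
  also have "\<dots> = lin (\<lambda>u. psi s (harm (phi_word u) x)) v"
  proof (rule lin_cong)
    fix u assume "u \<in> Poly_Mapping.keys v"
    then show "dwp s u w = psi s (harm (phi_word u) x)"
      using dwp_psi[OF s0 vk nzx] px by blast
  qed
  also have "\<dots> = psi s (harm (phi v) x)"
    unfolding phi_def
    by (rule linmap_lin_comp[OF linmap_comp[OF linmap_psi linmap_harmL], symmetric])
  finally show ?thesis unfolding x_def .
qed



end
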